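(* Let $\sigma=\begin{pmatrix}\frac13&0\\0&\frac23\end{pmatrix}$. There exists an extreme point of the convex set $\mathcal{CP}(M_2,M_2;\sigma,\sigma)$ of Kraus rank $2$.
   Context: $M_n$ denotes the complex $n\times n$ matrices. For positive semidefinite $A\in M_{d_1}$, $B\in M_{d_2}$, $\mathcal{CP}(M_{d_1},M_{d_2};A,B)$ is the convex set of completely positive maps $\Phi:M_{d_1}\to M_{d_2}$ with $\Phi(I_{d_1})=B$ and $\Phi^*(I_{d_2})=A$ ($\Phi^*$ the Hilbert–Schmidt adjoint); equivalently $\Phi(X)=\sum_iK_iXK_i^\dagger$ with $\sum_iK_i^\dagger K_i=A$, $\sum_iK_iK_i^\dagger=B$. An extreme point of a convex set $\mathcal{K}$ is an element not expressible as $t\Phi_1+(1-t)\Phi_2$ with $t\in(0,1)$ and distinct $\Phi_1,\Phi_2\in\mathcal{K}$. The Kraus rank of a completely positive map is the minimal number of Kraus operators in a Kraus decomposition (equal to the rank of its Choi matrix). *)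

theory Defs
  imports "HOL-Analysis.Analysis"
begin

type_synonym cmat2 = "complex^2^2"

definition cadj :: "cmat2 \<Rightarrow> cmat2" where
  "cadj A = (\<chi> i j. cnj (A $ j $ i))"

definition kraus_form :: "cmat2 list \<Rightarrow> (cmat2 \<Rightarrow> cmat2) \<Rightarrow> bool" where
  "kraus_form Ks \<Phi> \<longleftrightarrow> (\<forall>X. \<Phi> X = sum_list (map (\<lambda>K. K ** X ** cadj K) Ks))"

definition completely_positive :: "(cmat2 \<Rightarrow> cmat2) \<Rightarrow> bool" where
  "completely_positive \<Phi> \<longleftrightarrow> (\<exists>Ks. kraus_form Ks \<Phi>)"

definition hs_adjoint :: "(cmat2 \<Rightarrow> cmat2) \<Rightarrow> (cmat2 \<Rightarrow> cmat2)" where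
  "hs_adjoint \<Phi> = (THE \<Psi>. \<forall>X Y. trace (cadj (\<Psi> Y) ** X) = trace (cadj Y ** \<Phi> X))"

definition CP_set :: "cmat2 \<Rightarrow> cmat2 \<Rightarrow> (cmat2 \<Rightarrow> cmat2) set" where
  "CP_set A B = {\<Phi>. completely_positive \<Phi> \<and> \<Phi> (mat 1) = B \<and> hs_adjoint \<Phi> (mat 1) = A}"

definition is_extreme_point :: "(cmat2 \<Rightarrow> cmat2) \<Rightarrow> (cmat2 \<Rightarrow> cmat2) set \<Rightarrow> bool" where
  "is_extreme_point \<Phi> K \<longleftrightarrow> \<Phi> \<in> K \<and>
     \<not> (\<exists>t. t \<in> ({0<..<1}::real set) \<and> ( \<exists>P1 \<in> K. \<exists>P2 \<in> K. P1 \<noteq> P2 \<and>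
          \<Phi> = (\<lambda>X. t *\<^sub>R P1 X + (1 - t) *\<^sub>R P2 X)))"

definition kraus_rank :: "(cmat2 \<Rightarrow> cmat2) \<Rightarrow> nat" where
  "kraus_rank \<Phi> = (LEAST n. \<exists>Ks. length Ks = n \<and> kraus_form Ks \<Phi>)"

definition sigma :: cmat2 where
  "sigma = (\<chi> i j. if i = j then (if i = 0 then 1/3 else 2/3) else 0)"

end

theory Submission
  imports Defs
begin
definition mk :: "complex \<Rightarrow> complex \<Rightarrow> complex \<Rightarrow> complex \<Rightarrow> cmat2" where
  "mk a b c d = (\<chi> i j. if i = 1 then (if j = 1 then a else b) else (if j = 1 then c else d))"
lemma mk_simps[simp]: "mk a b c d $ 1 $ 1 = a" "mk a b c d $ 1 $ 2 = b" "mk a b c d $ 2 $ 1 = c" "mk a b c d $ 2 $ 2 = d"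
  by (simp_all add: mk_def)
lemma cmat_eq: "(A::cmat2) = B \<longleftrightarrow> A$1$1 = B$1$1 \<and> A$1$2 = B$1$2 \<and> A$2$1 = B$2$1 \<and> A$2$2 = B$2$2"
  by (auto simp: vec_eq_iff forall_2)
lemma mult_entries[simp]: "((A::cmat2) ** B) $ i $ j = A$i$1 * B$1$j + A$i$2 * B$2$j"
  by (simp add: matrix_matrix_mult_def sum_2)
lemma cadj_entries[simp]: "cadj A $ i $ j = cnj (A $ j $ i)"
  by (simp add: cadj_def)
lemma trace2: "trace (A::cmat2) = A$1$1 + A$2$2"
  by (simp add: trace_def sum_2)
lemma mat1_entries[simp]: "(mat 1 :: cmat2) $ 1 $ 1 = 1" "(mat 1 :: cmat2) $ 1 $ 2 = 0" "(mat 1 :: cmat2) $ 2 $ 1 = 0" "(mat 1 :: cmat2) $ 2 $ 2 = 1"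
  by (simp_all add: mat_def)
lemma sigma_entries[simp]: "sigma $ 1 $ 1 = 2/3" "sigma $ 1 $ 2 = 0" "sigma $ 2 $ 1 = 0" "sigma $ 2 $ 2 = 1/3"
  by (simp_all add: sigma_def)
lemma sum_list_vec: "(sum_list xs) $ i = sum_list (map (\<lambda>x. x $ i) xs)"
  by (induction xs) auto

definition Phi0 :: "cmat2 \<Rightarrow> cmat2" where
  "Phi0 X = mk ((X$1$1 + X$2$2)/3) (X$2$1/3) (X$1$2/3) (X$1$1/3)"

definition cc :: complex where "cc = complex_of_real (sqrt (1/3))"
lemma cc_sq: "cc * cnj cc = 1/3"
proof -
  have "cc * cnj cc = complex_of_real (sqrt (1/3) * sqrt (1/3))" unfolding cc_def complex_cnj_complex_of_real of_real_mult by simp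
  also have "sqrt (1/3) * sqrt (1/3) = (1/3::real)" by simp
  finally show ?thesis by simp
qed

definition K1 :: cmat2 where "K1 = mk cc 0 0 0"
definition K2 :: cmat2 where "K2 = mk 0 cc cc 0"

lemma cc_sq2[simp]: "cc * (cnj cc * x) = x/3"
  by (simp add: mult.assoc[symmetric] cc_sq)

lemma cc_sq3[simp]: "cc * x * cnj cc = x/3"
  by (metis cc_sq2 mult.commute mult.left_commute)

lemma Phi0_kraus: "kraus_form [K1, K2] Phi0"
  unfolding kraus_form_def
proof
  fix X
  have e: "cnj cc * cc = 1/3" using cc_sq by (simp add: mult.commute)
  show "Phi0 X = sum_list (map (\<lambda>K. K ** X ** cadj K) [K1, K2])"
    by (simp add: cmat_eq Phi0_def K1_def K2_def add_divide_distrib)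
qed

lemma Phi0_I: "Phi0 (mat 1) = sigma"
  by (simp add: cmat_eq Phi0_def)

lemma trace_eq_imp: assumes "\<forall>X. trace (cadj A ** X) = trace (cadj B ** (X::cmat2))" shows "A = B"
proof -
  have h: "\<And>a b c d. cnj (A$1$1) * a + cnj (A$2$1) * c + cnj (A$1$2) * b + cnj (A$2$2) * d
     = cnj (B$1$1) * a + cnj (B$2$1) * c + cnj (B$1$2) * b + cnj (B$2$2) * d"
  proof -
    fix a b c d
    show "?thesis a b c d" using assms[rule_format, of "mk a b c d"] by (simp add: trace2 algebra_simps)
  qed
  show ?thesis using h[of 1 0 0 0] h[of 0 1 0 0] h[of 0 0 1 0] h[of 0 0 0 1]
    by (simp add: cmat_eq)
qed

lemma Phi0_adj: "hs_adjoint Phi0 = Phi0"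
  unfolding hs_adjoint_def
proof (rule the_equality)
  show "\<forall>X Y. trace (cadj (Phi0 Y) ** X) = trace (cadj Y ** Phi0 X)"
    by (simp add: trace2 Phi0_def algebra_simps add_divide_distrib)
  fix \<Psi> assume h: "\<forall>X Y. trace (cadj (\<Psi> Y) ** X) = trace (cadj Y ** Phi0 X)"
  show "\<Psi> = Phi0"
  proof
    fix Y
    show "\<Psi> Y = Phi0 Y"
      by (rule trace_eq_imp) (use h in \<open>simp add: trace2 Phi0_def algebra_simps add_divide_distrib\<close>)
  qed
qed

lemma kraus_entry: "kraus_form Ls \<Psi> \<Longrightarrow> \<Psi> X $ i $ j = sum_list (map (\<lambda>L. (L ** X ** cadj L) $ i $ j) Ls)"
  unfolding kraus_form_def by (simp add: sum_list_vec o_def)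

definition q1 :: "(cmat2 \<Rightarrow> cmat2) \<Rightarrow> complex" where
  "q1 \<Psi> = \<Psi> (mk 0 0 0 1) $ 2 $ 2"
definition q2 :: "(cmat2 \<Rightarrow> cmat2) \<Rightarrow> complex" where
  "q2 \<Psi> = \<Psi> (mk 0 0 0 1) $ 1 $ 1 - \<Psi> (mk 0 0 1 0) $ 1 $ 2 - \<Psi> (mk 0 1 0 0) $ 2 $ 1 + \<Psi> (mk 1 0 0 0) $ 2 $ 2"

lemma sum_norm: "sum_list (map (\<lambda>L. f L * cnj (f L)) Ls) = complex_of_real (sum_list (map (\<lambda>L. (cmod (f L))^2) Ls))"
  by (induction Ls) (simp_all only: list.map sum_list.Cons sum_list.Nil of_real_add of_real_0 complex_norm_square)

lemma q1_kraus: "kraus_form Ls \<Psi> \<Longrightarrow> q1 \<Psi> = of_real (sum_list (map (\<lambda>L. (cmod (L$2$2))^2) Ls))"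
  unfolding q1_def
  by (simp add: kraus_entry sum_norm[of "\<lambda>L. L$2$2", symmetric])

lemma q2_kraus: "kraus_form Ls \<Psi> \<Longrightarrow> q2 \<Psi> = of_real (sum_list (map (\<lambda>L. (cmod (L$2$1 - L$1$2))^2) Ls))"
proof -
  assume k: "kraus_form Ls \<Psi>"
  have "q2 \<Psi> = sum_list (map (\<lambda>L. (L$2$1 - L$1$2) * cnj (L$2$1 - L$1$2)) Ls)"
    unfolding q2_def kraus_entry[OF k] sum_list_subtractf[symmetric] sum_list_addf[symmetric]
    by (rule arg_cong[where f=sum_list], rule map_cong) (simp_all add: ring_distribs)
  then show ?thesis by (simp only: sum_norm)
qed

definition Sbb where "Sbb Ls = sum_list (map (\<lambda>L::cmat2. L$1$2 * cnj (L$1$2)) Ls)"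
definition Sbg where "Sbg Ls = sum_list (map (\<lambda>L::cmat2. L$1$2 * cnj (L$1$1)) Ls)"
definition Sgb where "Sgb Ls = sum_list (map (\<lambda>L::cmat2. L$1$1 * cnj (L$1$2)) Ls)"
definition Sgg where "Sgg Ls = sum_list (map (\<lambda>L::cmat2. L$1$1 * cnj (L$1$1)) Ls)"

lemma formulaD: "\<forall>L\<in>set Ls. L$2$2 = 0 \<and> L$2$1 = L$1$2 \<Longrightarrow>
  sum_list (map (\<lambda>L. L ** X ** cadj L) Ls) =
  mk (X$2$2*Sbb Ls + X$1$2*Sgb Ls + X$2$1*Sbg Ls + X$1$1*Sgg Ls) (X$2$1*Sbb Ls + X$1$1*Sgb Ls)
     (X$1$2*Sbb Ls + X$1$1*Sbg Ls) (X$1$1*Sbb Ls)"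
proof (induction Ls)
  case Nil
  then show ?case by (simp add: cmat_eq Sbb_def Sbg_def Sgb_def Sgg_def)
next
  case (Cons a Ls)
  then have a: "a$2$2 = 0" "a$2$1 = a$1$2" by auto
  have IH: "sum_list (map (\<lambda>L. L ** X ** cadj L) Ls) =
  mk (X$2$2*Sbb Ls + X$1$2*Sgb Ls + X$2$1*Sbg Ls + X$1$1*Sgg Ls) (X$2$1*Sbb Ls + X$1$1*Sgb Ls)
     (X$1$2*Sbb Ls + X$1$1*Sbg Ls) (X$1$1*Sbb Ls)" using Cons by auto
  have S: "Sbb (a#Ls) = a$1$2 * cnj (a$1$2) + Sbb Ls" "Sbg (a#Ls) = a$1$2 * cnj (a$1$1) + Sbg Ls"
     "Sgb (a#Ls) = a$1$1 * cnj (a$1$2) + Sgb Ls" "Sgg (a#Ls) = a$1$1 * cnj (a$1$1) + Sgg Ls"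
    by (simp_all add: Sbb_def Sbg_def Sgb_def Sgg_def)
  show ?case unfolding list.map sum_list.Cons IH S
    by (simp add: cmat_eq a ring_distribs mult.commute mult.left_commute add.assoc add.left_commute)
qed

lemma lemmaC:
  assumes k: "kraus_form Ls \<Psi>" and I: "\<Psi> (mat 1) = sigma" and h1: "q1 \<Psi> = 0" and h2: "q2 \<Psi> = 0"
  shows "\<Psi> = Phi0 \<and> Sbb Ls = 1/3 \<and> Sbg Ls = 0 \<and> Sgg Ls = 1/3"
proof -
  have a: "sum_list (map (\<lambda>L. (cmod (L$2$2))^2) Ls) = 0" using h1 q1_kraus[OF k] by simp
  have b: "sum_list (map (\<lambda>L. (cmod (L$2$1 - L$1$2))^2) Ls) = 0" using h2 q2_kraus[OF k] by simp
  have a': "\<forall>L\<in>set Ls. L$2$2 = 0" using a by (subst (asm) sum_list_nonneg_eq_0_iff) auto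
  have b': "\<forall>L\<in>set Ls. L$2$1 = L$1$2" using b by (subst (asm) sum_list_nonneg_eq_0_iff) auto
  have hyp: "\<forall>L\<in>set Ls. L$2$2 = 0 \<and> L$2$1 = L$1$2" using a' b' by blast
  have form: "\<And>X. \<Psi> X = mk (X$2$2*Sbb Ls + X$1$2*Sgb Ls + X$2$1*Sbg Ls + X$1$1*Sgg Ls) (X$2$1*Sbb Ls + X$1$1*Sgb Ls)
     (X$1$2*Sbb Ls + X$1$1*Sbg Ls) (X$1$1*Sbb Ls)"
    using k formulaD[OF hyp] unfolding kraus_form_def by simp
  have "sigma = mk (Sbb Ls + Sgg Ls) (Sgb Ls) (Sbg Ls) (Sbb Ls)"
    using I form[of "mat 1"] by simp
  then have v: "Sbb Ls + Sgg Ls = 2/3" "Sgb Ls = 0" "Sbg Ls = 0" "Sbb Ls = 1/3"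
    by (metis mk_simps sigma_entries)+
  have vals: "Sbb Ls = 1/3" "Sgb Ls = 0" "Sbg Ls = 0" "Sgg Ls = 1/3"
  proof -
    from v(1) have "Sgg Ls = 2/3 - Sbb Ls" by (simp add: eq_diff_eq add.commute)
    then show "Sgg Ls = 1/3" using v(4) by simp
  qed (use v in auto)
  have "\<Psi> = Phi0"
  proof
    fix X show "\<Psi> X = Phi0 X" using form[of X] vals by (simp add: Phi0_def cmat_eq add_divide_distrib)
  qed
  then show ?thesis using vals by simp
qed

lemma q_Phi0: "q1 Phi0 = 0" "q2 Phi0 = 0"
  by (simp_all add: q1_def q2_def Phi0_def)

lemma Phi0_in: "Phi0 \<in> CP_set sigma sigma"
  unfolding CP_set_def completely_positive_def using Phi0_kraus Phi0_I Phi0_adj by auto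

lemma sum_sq_nonneg[simp]: "0 \<le> sum_list (map (\<lambda>L. (cmod (f L))^2) Ls)"
  by (rule sum_list_nonneg) auto

lemma realE:
  fixes t r1 r2 :: real
  assumes "0 < t" "t < 1" "0 \<le> r1" "0 \<le> r2"
    "complex_of_real t * of_real r1 + of_real (1-t) * of_real r2 = 0"
  shows "r1 = 0 \<and> r2 = 0"
proof -
  have "complex_of_real (t * r1 + (1-t) * r2) = 0" using assms(5) by simp
  then have e: "t * r1 + (1-t) * r2 = 0" by (simp only: of_real_eq_0_iff)
  have "t * r1 \<ge> 0" "(1-t) * r2 \<ge> 0" using assms by auto
  then have "t * r1 = 0" "(1-t)*r2 = 0" using e by linarith+
  then show ?thesis using assms by auto
qed

lemma in_CP_eq:
  assumes "P \<in> CP_set sigma sigma" "q1 P = 0" "q2 P = 0" shows "P = Phi0"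
proof -
  obtain Ls where k: "kraus_form Ls P" using assms(1) unfolding CP_set_def completely_positive_def by auto
  have "P (mat 1) = sigma" using assms(1) unfolding CP_set_def by auto
  then show ?thesis using lemmaC[OF k _ assms(2,3)] by auto
qed

lemma extreme: "is_extreme_point Phi0 (CP_set sigma sigma)"
  unfolding is_extreme_point_def
proof (intro conjI notI)
  show "Phi0 \<in> CP_set sigma sigma" by (rule Phi0_in)
  assume "\<exists>t. t \<in> {0<..<1} \<and> (\<exists>P1\<in>CP_set sigma sigma. \<exists>P2\<in>CP_set sigma sigma. P1 \<noteq> P2 \<and>
          Phi0 = (\<lambda>X. t *\<^sub>R P1 X + (1 - t) *\<^sub>R P2 X))"
  then obtain t P1 P2 where t: "0 < t" "t < 1" and P: "P1 \<in> CP_set sigma sigma" "P2 \<in> CP_set sigma sigma"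
    and ne: "P1 \<noteq> P2" and eq: "Phi0 = (\<lambda>X. t *\<^sub>R P1 X + (1 - t) *\<^sub>R P2 X)" by auto
  obtain Ls where k1: "kraus_form Ls P1" using P(1) unfolding CP_set_def completely_positive_def by auto
  obtain Ms where k2: "kraus_form Ms P2" using P(2) unfolding CP_set_def completely_positive_def by auto
  have c1: "q1 Phi0 = of_real t * q1 P1 + of_real (1-t) * q1 P2"
    by (subst eq) (simp add: q1_def vector_scaleR_component, simp add: scaleR_conv_of_real)
  have c2: "q2 Phi0 = of_real t * q2 P1 + of_real (1-t) * q2 P2"
    by (subst eq) (simp add: q2_def vector_scaleR_component, simp add: scaleR_conv_of_real algebra_simps)
  have z1: "q1 P1 = 0 \<and> q1 P2 = 0"
  proof -
    have "sum_list (map (\<lambda>L. (cmod (L$2$2))^2) Ls) = 0 \<and> sum_list (map (\<lambda>L. (cmod (L$2$2))^2) Ms) = 0"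
      by (rule realE[OF t]) (auto intro: sum_list_nonneg simp del: of_real_diff
         simp add: c1[unfolded q1_kraus[OF k1] q1_kraus[OF k2], symmetric] q_Phi0)
    then show ?thesis using q1_kraus[OF k1] q1_kraus[OF k2] by simp
  qed
  have z2: "q2 P1 = 0 \<and> q2 P2 = 0"
  proof -
    have "sum_list (map (\<lambda>L. (cmod (L$2$1 - L$1$2))^2) Ls) = 0 \<and> sum_list (map (\<lambda>L. (cmod (L$2$1 - L$1$2))^2) Ms) = 0"
      by (rule realE[OF t]) (auto intro: sum_list_nonneg simp del: of_real_diff
         simp add: c2[unfolded q2_kraus[OF k1] q2_kraus[OF k2], symmetric] q_Phi0)
    then show ?thesis using q2_kraus[OF k1] q2_kraus[OF k2] by simp
  qed
  have "P1 = Phi0" "P2 = Phi0" using in_CP_eq P z1 z2 by auto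
  then show False using ne by simp
qed

lemma rank: "kraus_rank Phi0 = 2"
  unfolding kraus_rank_def
proof (rule Least_equality)
  show "\<exists>Ks. length Ks = 2 \<and> kraus_form Ks Phi0" using Phi0_kraus by (intro exI[of _ "[K1,K2]"]) auto
  fix m assume "\<exists>Ks. length Ks = m \<and> kraus_form Ks Phi0"
  then obtain Ks where l: "length Ks = m" and k: "kraus_form Ks Phi0" by auto
  show "2 \<le> m"
  proof (rule ccontr)
    assume "\<not> 2 \<le> m"
    then have "m = 0 \<or> m = 1" by auto
    then show False
    proof
      assume "m = 0"
      then have "Ks = []" using l by simp
      then have "Phi0 (mat 1) = 0" using k unfolding kraus_form_def by simp
      then show False using Phi0_I by (simp add: cmat_eq)
    next
      assume "m = 1"
      then obtain L where "Ks = [L]" using l by (metis One_nat_def length_0_conv length_Suc_conv)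
      then have k': "kraus_form [L] Phi0" using k by simp
      have v: "Sbb [L] = 1/3" "Sbg [L] = 0" "Sgg [L] = 1/3"
        using lemmaC[OF k' Phi0_I q_Phi0] by auto
      have "L$1$2 \<noteq> 0" using v(1) by (auto simp: Sbb_def)
      moreover have "L$1$2 * cnj (L$1$1) = 0" using v(2) by (simp add: Sbg_def)
      ultimately have "L$1$1 = 0" by simp
      then show False using v(3) by (simp add: Sgg_def)
    qed
  qed
qed

theorem mainTheorem7:
  shows "\<exists>\<Phi>. is_extreme_point \<Phi> (CP_set sigma sigma) \<and> kraus_rank \<Phi> = 2"
  using extreme rank by blast

end
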